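(* Let $(\Omega,\mathcal F)$ be a measurable space with $\Sigma\neq\emptyset$, $\nu$ a finite measure, and $\mu$ a finite measure with $\mu\ll\nu$. Let $F_\mu(y)=\nu(\{\omega:\frac{d\mu}{d\nu}(\omega)\le y\})$, $F_\mu(+\infty)=\lim_{y\to\infty}F_\mu(y)$, $v_\mu(A)=\int_0^\infty\min(\nu(\Omega)-F_\mu(z),\nu(A))\,dz$, and let $m$ be the measure on $(0,1]$ determined by $m((0,\gamma])=\frac1{\mu(\Omega)}\int_{\{y\ge0:\ F_\mu(y)\ge(1-\gamma)\nu(\Omega)\}}(F_\mu(+\infty)-F_\mu(y))\,dy$, $\gamma\in(0,1]$. Then for every non-negative measurable $f:\Omega\to[0,\infty)$, $$v_\mu(f)=\int_{(0,1]}v_\alpha(f)\,m(d\alpha),\quad v_\alpha(f)=\frac{\mu(\Omega)}{\alpha\nu(\Omega)}\int_0^\infty\min\big(\nu(\{\omega:f(\omega)>z\}),\alpha\nu(\Omega)\big)\,dz,$$ where $v_\mu(f)=\int_0^\infty v_\mu(\{\omega:f(\omega)>z\})\,dz$.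
   Context: $\Sigma$ denotes the set of all classes $\mathcal I\subset\mathcal F$ that are chains (totally ordered by inclusion), contain $\emptyset$ and $\Omega$, and generate $\mathcal F$ as a $\sigma$-algebra. $\frac{d\mu}{d\nu}$ is the non-negative Radon–Nikodym derivative. *)

theory Defs
  imports "HOL-Probability.Probability"
begin

definition Sigma_chains :: "'a measure \<Rightarrow> 'a set set set" where
  "Sigma_chains M = {I. I \<subseteq> sets M \<and> {} \<in> I \<and> space M \<in> I \<and>
       (\<forall>A\<in>I. \<forall>B\<in>I. A \<subseteq> B \<or> B \<subseteq> A) \<and> sigma_sets (space M) I = sets M}"

definition Fmu :: "'a measure \<Rightarrow> 'a measure \<Rightarrow> real \<Rightarrow> ennreal" where
  "Fmu \<nu> \<mu> y = emeasure \<nu> {\<omega>\<in>space \<nu>. RN_deriv \<nu> \<mu> \<omega> \<le> ennreal y}"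

definition Fmu_inf :: "'a measure \<Rightarrow> 'a measure \<Rightarrow> ennreal" where
  "Fmu_inf \<nu> \<mu> = Lim at_top (Fmu \<nu> \<mu>)"

definition vmu_set :: "'a measure \<Rightarrow> 'a measure \<Rightarrow> 'a set \<Rightarrow> ennreal" where
  "vmu_set \<nu> \<mu> A =
     (\<integral>\<^sup>+ z\<in>{0..}. min (emeasure \<nu> (space \<nu>) - Fmu \<nu> \<mu> z) (emeasure \<nu> A) \<partial>lborel)"

definition vmu_fun :: "'a measure \<Rightarrow> 'a measure \<Rightarrow> ('a \<Rightarrow> real) \<Rightarrow> ennreal" where
  "vmu_fun \<nu> \<mu> f = (\<integral>\<^sup>+ z\<in>{0..}. vmu_set \<nu> \<mu> {\<omega>\<in>space \<nu>. f \<omega> > z} \<partial>lborel)"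

definition valpha :: "'a measure \<Rightarrow> 'a measure \<Rightarrow> real \<Rightarrow> ('a \<Rightarrow> real) \<Rightarrow> ennreal" where
  "valpha \<nu> \<mu> \<alpha> f =
     emeasure \<mu> (space \<mu>) / (ennreal \<alpha> * emeasure \<nu> (space \<nu>)) *
     (\<integral>\<^sup>+ z\<in>{0..}. min (emeasure \<nu> {\<omega>\<in>space \<nu>. f \<omega> > z})
                           (ennreal \<alpha> * emeasure \<nu> (space \<nu>)) \<partial>lborel)"

end

theory Submission
  imports Defs
begin

lemma emeasure_lborel_Ici0: "emeasure lborel {0::real..} = \<infinity>"
proof (rule ccontr)
  assume "emeasure lborel {0::real..} \<noteq> \<infinity>"
  then obtain r where r: "emeasure lborel {0::real..} = ennreal r" "0 \<le> r"
    using ennreal_cases by (metis infinity_ennreal_def)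
  have "emeasure lborel {0..<r+1} \<le> emeasure lborel {0::real..}"
    by (rule emeasure_mono) auto
  then show False using r by (simp add: emeasure_lborel_Ico ennreal_le_iff)
qed
lemma antimono_emeasure_measurable:
  assumes fin: "finite_measure \<nu>" and sets: "\<And>t. A t \<in> sets \<nu>"
    and anti: "\<And>s t. s \<le> t \<Longrightarrow> A t \<subseteq> A s"
  shows "(\<lambda>t::real. emeasure \<nu> (A t)) \<in> borel_measurable borel"
proof -
  have "mono (\<lambda>t. - measure \<nu> (A t))"
    unfolding mono_def using finite_measure.finite_measure_mono[OF fin anti sets] by auto
  then have "(\<lambda>t. - measure \<nu> (A t)) \<in> borel_measurable borel" by (rule borel_measurable_mono)
  then have "(\<lambda>t. ennreal (- (- measure \<nu> (A t)))) \<in> borel_measurable borel" by measurable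
  then show ?thesis using finite_measure.emeasure_eq_measure[OF fin] by simp
qed

lemma layer_cake_ennreal:
  assumes sf: "sigma_finite_measure \<nu>" and g[measurable]: "g \<in> borel_measurable \<nu>"
  shows "(\<integral>\<^sup>+ y\<in>{0..}. emeasure \<nu> {\<omega>\<in>space \<nu>. ennreal y < g \<omega>} \<partial>lborel) = (\<integral>\<^sup>+ \<omega>. g \<omega> \<partial>\<nu>)"
proof -
  interpret pair_sigma_finite \<nu> lborel
    using sf by (simp add: pair_sigma_finite_def lborel.sigma_finite_measure_axioms)
  have "(\<integral>\<^sup>+ y\<in>{0..}. emeasure \<nu> {\<omega>\<in>space \<nu>. ennreal y < g \<omega>} \<partial>lborel)
     = (\<integral>\<^sup>+ y. (\<integral>\<^sup>+ \<omega>. indicator {0..} y * indicator {\<omega>\<in>space \<nu>. ennreal y < g \<omega>} \<omega> \<partial>\<nu>) \<partial>lborel)"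
    by (intro nn_integral_cong) (simp add: nn_integral_cmult nn_integral_indicator mult.commute)
  also have "\<dots> = (\<integral>\<^sup>+ \<omega>. (\<integral>\<^sup>+ y. indicator {0..} y * indicator {\<omega>\<in>space \<nu>. ennreal y < g \<omega>} \<omega> \<partial>lborel) \<partial>\<nu>)"
    by (rule Fubini') measurable
  also have "\<dots> = (\<integral>\<^sup>+ \<omega>. g \<omega> \<partial>\<nu>)"
  proof (intro nn_integral_cong)
    fix \<omega> assume \<omega>: "\<omega> \<in> space \<nu>"
    have "(\<integral>\<^sup>+ y. indicator {0..} y * indicator {\<omega>\<in>space \<nu>. ennreal y < g \<omega>} \<omega> \<partial>lborel)
        = (\<integral>\<^sup>+ y. indicator {y. 0 \<le> y \<and> ennreal y < g \<omega>} y \<partial>lborel)"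
      using \<omega> by (intro nn_integral_cong) (auto simp: indicator_def)
    also have "\<dots> = emeasure lborel {y. 0 \<le> y \<and> ennreal y < g \<omega>}"
      by (rule nn_integral_indicator) measurable
    also have "\<dots> = g \<omega>"
    proof (cases "g \<omega>")
      case (real r)
      then have "{y. 0 \<le> y \<and> ennreal y < g \<omega>} = {0..<r}"
        by (auto simp: ennreal_less_iff)
      then show ?thesis using real by (simp add: emeasure_lborel_Ico)
    next
      case top
      then have "{y. 0 \<le> y \<and> ennreal y < g \<omega>} = {0..}" by auto
      then show ?thesis using top
        by (simp add: emeasure_lborel_Ici0)
    qed
    finally show "(\<integral>\<^sup>+ y. indicator {0..} y * indicator {\<omega>\<in>space \<nu>. ennreal y < g \<omega>} \<omega> \<partial>lborel) = g \<omega>" .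
  qed
  finally show ?thesis .
qed
lemma measure_eqI_atMost_real:
  fixes M N :: "real measure"
  assumes sets: "sets M = sets borel" "sets N = sets borel"
  assumes fin: "\<And>x. emeasure M {..x} < \<infinity>"
  assumes eq: "\<And>x. emeasure M {..x} = emeasure N {..x}"
  shows "M = N"
proof (rule measure_eqI_generator_eq_countable)
  let ?LT = "\<lambda>a::real. {..a}" let ?E = "range ?LT"
  show "Int_stable ?E"
    by (auto simp: Int_stable_def)
  have "sets borel = sigma_sets UNIV ?E"
    by (subst borel_eq_atMost) simp
  then show "?E \<subseteq> Pow UNIV" "sets M = sigma_sets UNIV ?E" "sets N = sigma_sets UNIV ?E"
    using sets by auto
  show "?LT`Rats \<subseteq> ?E" "(\<Union>i\<in>Rats. ?LT i) = UNIV" "\<And>a. a \<in> ?LT`Rats \<Longrightarrow> emeasure M a \<noteq> \<infinity>"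
    using fin by (auto intro: Rats_no_top_le simp: less_top)
qed (auto intro: eq countable_rat)

lemma "(\<lambda>a::real. (M::ennreal) / (ennreal a * N) * min c (ennreal a * N)) \<in> borel_measurable borel"
  by measurable
lemma ennreal_div_cancel_aux:
  fixes a b :: real and z :: ennreal
  assumes "0 < a" "0 < b"
  shows "ennreal a / ennreal b * (ennreal b / ennreal a * z) = z"
proof -
  have "ennreal a / ennreal b * (ennreal b / ennreal a * z) = (ennreal (a / b) * ennreal (b / a)) * z"
    using assms by (simp add: divide_ennreal mult.assoc)
  also have "ennreal (a / b) * ennreal (b / a) = ennreal (a / b * (b / a))"
    using assms by (intro ennreal_mult[symmetric]) auto
  also have "a / b * (b / a) = 1" using assms by simp
  finally show ?thesis by simp
qed
theorem proposition19:
  fixes \<nu> \<mu> :: "'a measure" and m :: "real measure" and f :: "'a \<Rightarrow> real"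
  assumes "Sigma_chains \<nu> \<noteq> {}"
    and "finite_measure \<nu>" and "finite_measure \<mu>"
    and "sets \<mu> = sets \<nu>" and "absolutely_continuous \<nu> \<mu>"
    and "sets m = sets (restrict_space borel {0<..1})"
    and "\<forall>\<gamma>\<in>{0<..1::real}. emeasure m {0<..\<gamma>} =
          (\<integral>\<^sup>+ y\<in>{y. 0 \<le> y \<and> Fmu \<nu> \<mu> y \<ge> ennreal (1 - \<gamma>) * emeasure \<nu> (space \<nu>)}.
              (Fmu_inf \<nu> \<mu> - Fmu \<nu> \<mu> y) \<partial>lborel) / emeasure \<mu> (space \<mu>)"
    and "f \<in> borel_measurable \<nu>" and "\<forall>\<omega>\<in>space \<nu>. 0 \<le> f \<omega>"
  shows "vmu_fun \<nu> \<mu> f = (\<integral>\<^sup>+ \<alpha>. valpha \<nu> \<mu> \<alpha> f \<partial>m)"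
proof -
  interpret nu: finite_measure \<nu> by fact
  interpret mu: finite_measure \<mu> by fact
  note f_meas[measurable] = assms(8)
  define g where "g = RN_deriv \<nu> \<mu>"
  have g_meas[measurable]: "g \<in> borel_measurable \<nu>" by (simp add: g_def)
  have dens: "density \<nu> g = \<mu>"
    unfolding g_def by (rule nu.density_RN_deriv[OF assms(5,4)])
  have sp_mu: "space \<mu> = space \<nu>" using assms(4) by (rule sets_eq_imp_space_eq)
  define N where "N = emeasure \<nu> (space \<nu>)"
  define M where "M = emeasure \<mu> (space \<mu>)"
  have M_int: "M = (\<integral>\<^sup>+ \<omega>. g \<omega> \<partial>\<nu>)"
  proof -
    have "M = emeasure (density \<nu> g) (space \<nu>)" unfolding M_def dens sp_mu ..
    also have "\<dots> = (\<integral>\<^sup>+ \<omega>. g \<omega> * indicator (space \<nu>) \<omega> \<partial>\<nu>)"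
      by (rule emeasure_density) auto
    also have "\<dots> = (\<integral>\<^sup>+ \<omega>. g \<omega> \<partial>\<nu>)"
      by (intro nn_integral_cong) auto
    finally show ?thesis .
  qed
  define G where "G y = emeasure \<nu> {\<omega>\<in>space \<nu>. ennreal y < g \<omega>}" for y :: real
  define Nr where "Nr = measure \<nu> (space \<nu>)"
  define Gr where "Gr y = measure \<nu> {\<omega>\<in>space \<nu>. ennreal y < g \<omega>}" for y :: real
  have N_Nr: "N = ennreal Nr" unfolding N_def Nr_def by (rule nu.emeasure_eq_measure)
  have G_Gr: "G y = ennreal (Gr y)" for y unfolding G_def Gr_def by (rule nu.emeasure_eq_measure)
  have Gr_nn: "0 \<le> Gr y" for y unfolding Gr_def by simp
  have Nr_nn: "0 \<le> Nr" unfolding Nr_def by simp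
  have Gr_le: "Gr y \<le> Nr" for y unfolding Gr_def Nr_def
    by (rule nu.finite_measure_mono) auto
  have F_eq: "Fmu \<nu> \<mu> y = ennreal (Nr - Gr y)" for y
  proof -
    have "Fmu \<nu> \<mu> y = ennreal (measure \<nu> (space \<nu> - {\<omega>\<in>space \<nu>. ennreal y < g \<omega>}))"
      unfolding Fmu_def g_def[symmetric] nu.emeasure_eq_measure
      by (rule arg_cong[where f="\<lambda>A. ennreal (measure \<nu> A)"]) (auto simp: not_less)
    also have "\<dots> = ennreal (Nr - Gr y)"
      unfolding Nr_def Gr_def by (subst nu.finite_measure_Diff) auto
    finally show ?thesis .
  qed
  have NF: "N - Fmu \<nu> \<mu> y = G y" for y
    unfolding N_Nr F_eq G_Gr using Gr_nn Gr_le
    by (subst ennreal_minus) auto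
  have Finf: "Fmu_inf \<nu> \<mu> = N"
  proof -
    have F_mono: "Fmu \<nu> \<mu> x \<le> Fmu \<nu> \<mu> y" if "x \<le> y" for x y
      unfolding Fmu_def using that
      by (intro emeasure_mono) (auto intro: order_trans[OF _ ennreal_leI])
    have F_le: "Fmu \<nu> \<mu> y \<le> N" for y
      unfolding Fmu_def N_def by (rule emeasure_mono) auto
    have fin_ae: "AE \<omega> in \<nu>. g \<omega> \<noteq> \<infinity>"
      unfolding g_def by (rule nu.RN_deriv_finite[OF _ assms(5,4)]) (rule mu.sigma_finite_measure_axioms)
    have SUP: "(SUP n::nat. Fmu \<nu> \<mu> (real n)) = N"
    proof -
      have "(SUP n::nat. Fmu \<nu> \<mu> (real n)) = emeasure \<nu> (\<Union>n. {\<omega>\<in>space \<nu>. g \<omega> \<le> ennreal (real n)})"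
        unfolding Fmu_def g_def[symmetric]
        by (rule SUP_emeasure_incseq) (auto simp: incseq_def intro: order_trans[OF _ ennreal_leI])
      also have "\<dots> = N" unfolding N_def
      proof (rule emeasure_eq_AE)
        show "AE x in \<nu>. (x \<in> (\<Union>n. {\<omega> \<in> space \<nu>. g \<omega> \<le> ennreal (real n)})) = (x \<in> space \<nu>)"
          using fin_ae
        proof eventually_elim
          case (elim x)
          then obtain n where "g x < of_nat n" using ennreal_Ex_less_of_nat by (auto simp: less_top)
          then have "g x \<le> ennreal (real n)" by (simp add: ennreal_of_nat_eq_real_of_nat)
          then show ?case by auto
        qed
      qed auto
      finally show ?thesis .
    qed
    have "(Fmu \<nu> \<mu> \<longlongrightarrow> N) at_top"
    proof (rule order_tendstoI)
      fix a assume "a < N"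
      then obtain n :: nat where n: "a < Fmu \<nu> \<mu> (real n)"
        unfolding SUP[symmetric] less_SUP_iff by auto
      show "eventually (\<lambda>x. a < Fmu \<nu> \<mu> x) at_top"
        unfolding eventually_at_top_linorder
        by (rule exI[of _ "real n"]) (auto intro: less_le_trans[OF n F_mono])
    next
      fix a assume "N < a"
      then show "eventually (\<lambda>x. Fmu \<nu> \<mu> x < a) at_top"
        using F_le by (intro always_eventually allI) (auto intro: le_less_trans)
    qed
    then show ?thesis unfolding Fmu_inf_def by (intro tendsto_Lim) auto
  qed
  have G_meas[measurable]: "G \<in> borel_measurable borel"
    unfolding G_def by (rule antimono_emeasure_measurable[OF assms(2)]) (auto intro: le_less_trans[OF ennreal_leI])
  have Gr_meas[measurable]: "Gr \<in> borel_measurable borel"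
  proof -
    have "(\<lambda>y. enn2real (G y)) \<in> borel_measurable borel" by measurable
    then show ?thesis using G_Gr Gr_nn by simp
  qed
  define c where "c t = emeasure \<nu> {\<omega>\<in>space \<nu>. f \<omega> > t}" for t :: real
  have c_meas[measurable]: "c \<in> borel_measurable borel"
    unfolding c_def by (rule antimono_emeasure_measurable[OF assms(2)]) auto
  have c_le: "c t \<le> N" for t unfolding c_def N_def by (rule emeasure_mono) auto
  have LHS: "vmu_fun \<nu> \<mu> f = (\<integral>\<^sup>+ t\<in>{0..}. (\<integral>\<^sup>+ z\<in>{0..}. min (G z) (c t) \<partial>lborel) \<partial>lborel)"
    unfolding vmu_fun_def vmu_set_def N_def[symmetric] NF c_def ..
  have layer: "(\<integral>\<^sup>+ y\<in>{0..}. G y \<partial>lborel) = M"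
    unfolding G_def M_int by (rule layer_cake_ennreal) (auto intro: nu.sigma_finite_measure_axioms)
  have valpha_eq: "valpha \<nu> \<mu> \<alpha> f = M / (ennreal \<alpha> * N) * (\<integral>\<^sup>+ z\<in>{0..}. min (c z) (ennreal \<alpha> * N) \<partial>lborel)" for \<alpha>
    unfolding valpha_def M_def N_def c_def ..
  show ?thesis
  proof (cases "M = 0")
    case True
    have ae: "AE \<omega> in \<nu>. g \<omega> = 0"
      using M_int True by (subst nn_integral_0_iff_AE[symmetric]) auto
    have G0: "G y = 0" if "0 \<le> y" for y
    proof -
      have "AE \<omega> in \<nu>. \<not> (ennreal y < g \<omega>)" using ae by eventually_elim auto
      then show ?thesis unfolding G_def by (subst (asm) AE_iff_measurable[OF _ refl]) auto
    qed
    have inner0: "(\<integral>\<^sup>+ z\<in>{0..}. min (G z) (c t) \<partial>lborel) = 0" for t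
    proof -
      have "(\<lambda>z. min (G z) (c t) * indicator {0..} z) = (\<lambda>z. 0)"
        by (auto simp: fun_eq_iff G0 indicator_def)
      then show ?thesis by simp
    qed
    have "vmu_fun \<nu> \<mu> f = 0"
      unfolding LHS inner0 by simp
    also have "0 = (\<integral>\<^sup>+ \<alpha>. valpha \<nu> \<mu> \<alpha> f \<partial>m)"
      unfolding valpha_eq True by simp
    finally show ?thesis .
  next
    case False
    define Mr where "Mr = measure \<mu> (space \<mu>)"
    have M_Mr: "M = ennreal Mr" unfolding M_def Mr_def by (rule mu.emeasure_eq_measure)
    have Mr_pos: "0 < Mr"
      using False M_Mr unfolding Mr_def by (simp add: zero_less_measure_iff)
    have Nr_pos: "0 < Nr"
    proof (rule ccontr)
      assume "\<not> 0 < Nr" then have N0: "N = 0" using N_Nr Nr_nn by simp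
      have "AE \<omega> in \<nu>. g \<omega> = 0"
        by (rule AE_I'[of "space \<nu>"]) (use N0 in \<open>auto simp: N_def\<close>)
      then have "M = 0" unfolding M_int by (subst nn_integral_0_iff_AE) auto
      with False show False by simp
    qed
    have M_fin: "M < \<infinity>" using M_Mr by simp
    define P where "P x = (\<integral>\<^sup>+ y. indicator {0..} y * G y / M * indicator {y. Gr y / Nr \<le> x} y \<partial>lborel)" for x
    define D where "D = density lborel (\<lambda>y. indicator {0..} y * G y / M)"
    define m' where "m' = distr D borel (\<lambda>y. Gr y / Nr)"
    define mb where "mb = distr m borel (\<lambda>x. x)"
    have id_meas: "(\<lambda>x. x) \<in> measurable m borel"
    proof -
      have "(\<lambda>x::real. x) \<in> measurable (restrict_space borel {0<..1}) borel"
        by (rule measurable_restrict_space1) simp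
      then show ?thesis by (subst measurable_cong_sets[OF assms(6) refl])
    qed
    have sp_m: "space m = {0<..1}"
      using sets_eq_imp_space_eq[OF assms(6)] by (simp add: space_restrict_space)
    have set_eq: "{y. 0 \<le> y \<and> ennreal (1 - \<gamma>) * emeasure \<nu> (space \<nu>) \<le> Fmu \<nu> \<mu> y}
        = {y. 0 \<le> y \<and> Gr y / Nr \<le> \<gamma>}" if "\<gamma> \<le> 1" for \<gamma>
    proof -
      have "ennreal (1 - \<gamma>) * emeasure \<nu> (space \<nu>) \<le> Fmu \<nu> \<mu> y \<longleftrightarrow> Gr y / Nr \<le> \<gamma>" for y
      proof -
        have "ennreal (1 - \<gamma>) * emeasure \<nu> (space \<nu>) = ennreal ((1 - \<gamma>) * Nr)"
          using that Nr_nn N_Nr N_def by (simp add: ennreal_mult)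
        then have "ennreal (1 - \<gamma>) * emeasure \<nu> (space \<nu>) \<le> Fmu \<nu> \<mu> y \<longleftrightarrow> (1 - \<gamma>) * Nr \<le> Nr - Gr y"
          using Gr_le[of y] by (simp add: F_eq ennreal_le_iff)
        also have "\<dots> \<longleftrightarrow> Gr y / Nr \<le> \<gamma>"
          using Nr_pos by (simp add: pos_divide_le_eq algebra_simps)
        finally show ?thesis .
      qed
      then show ?thesis by auto
    qed
    have m_int: "emeasure m {0<..\<gamma>} = P \<gamma>" if "0 < \<gamma>" "\<gamma> \<le> 1" for \<gamma>
    proof -
      have "emeasure m {0<..\<gamma>} = (\<integral>\<^sup>+ y. G y * indicator {y. 0 \<le> y \<and> Gr y / Nr \<le> \<gamma>} y \<partial>lborel) / M"
        using bspec[OF assms(7), of \<gamma>] that unfolding Finf NF set_eq[OF that(2)] M_def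
        by (auto simp: mult.commute)
      also have "\<dots> = (\<integral>\<^sup>+ y. G y * indicator {y. 0 \<le> y \<and> Gr y / Nr \<le> \<gamma>} y / M \<partial>lborel)"
        by (rule nn_integral_divide[symmetric]) measurable
      also have "\<dots> = P \<gamma>" unfolding P_def
        by (intro nn_integral_cong) (auto simp: indicator_def)
      finally show ?thesis .
    qed
    have P1: "P 1 = 1"
    proof -
      have "P 1 = (\<integral>\<^sup>+ y. G y * indicator {0..} y / M \<partial>lborel)"
        unfolding P_def using Gr_le Nr_pos
        by (intro nn_integral_cong) (auto simp: indicator_def)
      also have "\<dots> = M / M" using layer
        by (subst nn_integral_divide) auto
      also have "\<dots> = 1" using False M_fin by simp
      finally show ?thesis .
    qed
    have P_ge1: "P x = P 1" if "1 \<le> x" for x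
    proof -
      have "Gr y \<le> x * Nr" for y
        using Gr_le[of y] mult_right_mono[OF that, of Nr] Nr_pos by linarith
      then show ?thesis
      unfolding P_def using Gr_le Nr_pos that
      by (intro nn_integral_cong) (auto simp: indicator_def divide_le_eq)
    qed
    have P_le0: "P x = 0" if "x \<le> 0" for x
    proof -
      have "P x = (\<integral>\<^sup>+ y. 0 \<partial>(lborel::real measure))" unfolding P_def
      proof (intro nn_integral_cong)
        fix y
        show "indicator {0..} y * G y / M * indicator {y. Gr y / Nr \<le> x} y = 0"
        proof (cases "Gr y / Nr \<le> x")
          case True
          then have "Gr y \<le> x * Nr" using Nr_pos by (simp add: pos_divide_le_eq)
          moreover have "x * Nr \<le> 0" using that Nr_pos by (simp add: mult_nonpos_nonneg)
          ultimately have "Gr y = 0" using Gr_nn[of y] by linarith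
          then show ?thesis by (simp add: G_Gr)
        qed simp
      qed
      then show ?thesis by simp
    qed
    have mb_eq: "mb = m'"
    proof (rule measure_eqI_atMost_real)
      show "sets mb = sets borel" "sets m' = sets borel" unfolding mb_def m'_def by auto
      have mb_at: "emeasure mb {..x} = emeasure m ({..x} \<inter> {0<..1})" for x
        unfolding mb_def by (subst emeasure_distr) (auto simp: sp_m id_meas)
      show "emeasure mb {..x} < \<infinity>" for x
      proof -
        have "emeasure mb {..x} \<le> emeasure m (space m)" unfolding mb_at sp_m[symmetric]
          by (rule emeasure_mono) auto
        also have "\<dots> = 1" using m_int[of 1] P1 sp_m by simp
        finally show ?thesis by (simp add: le_less_trans)
      qed
      show "emeasure mb {..x} = emeasure m' {..x}" for x
      proof -
        have "emeasure mb {..x} = P x"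
        proof (cases "x \<le> 0")
          case True
          then have "{..x} \<inter> {0<..1} = {}" by auto
          then show ?thesis using P_le0[OF True] by (simp add: mb_at)
        next
          case False
          show ?thesis
          proof (cases "x \<le> 1")
            case True
            then have "{..x} \<inter> {0<..1} = {0<..x}" by auto
            then show ?thesis using True False by (simp add: mb_at m_int)
          next
            case False
            then have "{..x} \<inter> {0<..1} = {0<..1}" by auto
            then have "emeasure mb {..x} = P 1" by (simp add: mb_at m_int)
            then show ?thesis using P_ge1[of x] False by simp
          qed
        qed
        also have "P x = emeasure m' {..x}"
          unfolding m'_def D_def P_def
          by (subst emeasure_distr) (auto simp: emeasure_density vimage_def)
        finally show ?thesis .
      qed
    qed
    define \<psi> where "\<psi> c0 \<alpha> = M / (ennreal \<alpha> * N) * min c0 (ennreal \<alpha> * N)" for c0 \<alpha>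
    have \<psi>_meas[measurable]: "\<psi> c0 \<in> borel_measurable borel" for c0
      unfolding \<psi>_def by measurable
    have int_m: "(\<integral>\<^sup>+ \<alpha>. \<psi> c0 \<alpha> \<partial>m) = (\<integral>\<^sup>+ y\<in>{0..}. min (G y) c0 \<partial>lborel)" for c0
    proof -
      have "(\<integral>\<^sup>+ \<alpha>. \<psi> c0 \<alpha> \<partial>m) = (\<integral>\<^sup>+ \<alpha>. \<psi> c0 \<alpha> \<partial>mb)"
        unfolding mb_def by (subst nn_integral_distr) (auto simp: id_meas)
      also have "\<dots> = (\<integral>\<^sup>+ y. \<psi> c0 (Gr y / Nr) \<partial>D)"
        unfolding mb_eq m'_def by (subst nn_integral_distr) (auto simp: D_def)
      also have "\<dots> = (\<integral>\<^sup>+ y. indicator {0..} y * G y / M * \<psi> c0 (Gr y / Nr) \<partial>lborel)"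
        unfolding D_def by (subst nn_integral_density) auto
      also have "\<dots> = (\<integral>\<^sup>+ y\<in>{0..}. min (G y) c0 \<partial>lborel)"
      proof (intro nn_integral_cong)
        fix y
        show "indicator {0..} y * G y / M * \<psi> c0 (Gr y / Nr) = min (G y) c0 * indicator {0..} y"
        proof (cases "Gr y = 0")
          case True
          then show ?thesis by (simp add: G_Gr)
        next
          case False
          then have Gp: "0 < Gr y" using Gr_nn[of y] by simp
          have "ennreal (Gr y / Nr) * N = G y"
            using Nr_pos Gp by (simp add: N_Nr G_Gr ennreal_mult[symmetric])
          then have "G y / M * \<psi> c0 (Gr y / Nr) = min c0 (G y)"
            unfolding \<psi>_def G_Gr M_Mr using Gp Mr_pos
            by (simp add: ennreal_div_cancel_aux)
          then show ?thesis by (auto simp: indicator_def min.commute)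
        qed
      qed
      finally show ?thesis .
    qed
    have fin_m: "finite_measure m"
      by (rule finite_measureI) (use m_int[of 1] P1 sp_m in simp)
    interpret fm: finite_measure m by (rule fin_m)
    interpret pm: pair_sigma_finite m lborel
      by (simp add: pair_sigma_finite_def lborel.sigma_finite_measure_axioms fm.sigma_finite_measure_axioms)
    have "(\<integral>\<^sup>+ \<alpha>. valpha \<nu> \<mu> \<alpha> f \<partial>m) = (\<integral>\<^sup>+ \<alpha>. (\<integral>\<^sup>+ z. indicator {0..} z * \<psi> (c z) \<alpha> \<partial>lborel) \<partial>m)"
    proof (intro nn_integral_cong)
      fix \<alpha>
      show "valpha \<nu> \<mu> \<alpha> f = (\<integral>\<^sup>+ z. indicator {0..} z * \<psi> (c z) \<alpha> \<partial>lborel)"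
        unfolding valpha_eq \<psi>_def
        by (subst nn_integral_cmult[symmetric]) (auto simp: mult_ac intro!: nn_integral_cong)
    qed
    also have "\<dots> = (\<integral>\<^sup>+ z. (\<integral>\<^sup>+ \<alpha>. indicator {0..} z * \<psi> (c z) \<alpha> \<partial>m) \<partial>lborel)"
    proof (rule pm.Fubini'[symmetric])
      have F_meas: "(\<lambda>p::real\<times>real. indicator {0..} (snd p) * \<psi> (c (snd p)) (fst p)) \<in> borel_measurable (borel \<Otimes>\<^sub>M borel)"
        unfolding \<psi>_def by measurable
      have "fst \<in> measurable (m \<Otimes>\<^sub>M lborel) borel"
        by (rule measurable_compose[OF measurable_fst id_meas])
      moreover have "snd \<in> measurable (m \<Otimes>\<^sub>M lborel) borel"
        by (rule measurable_compose[OF measurable_snd]) simp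
      ultimately have "(\<lambda>p. (fst p, snd p)) \<in> measurable (m \<Otimes>\<^sub>M lborel) (borel \<Otimes>\<^sub>M borel)"
        by (rule measurable_Pair)
      from measurable_compose[OF this F_meas]
      show "(\<lambda>(\<alpha>, z). indicator {0..} z * \<psi> (c z) \<alpha>) \<in> borel_measurable (m \<Otimes>\<^sub>M lborel)"
        by (simp add: case_prod_beta')
    qed
    also have "\<dots> = (\<integral>\<^sup>+ z. indicator {0..} z * (\<integral>\<^sup>+ y\<in>{0..}. min (G y) (c z) \<partial>lborel) \<partial>lborel)"
    proof (intro nn_integral_cong)
      fix z
      have "\<psi> (c z) \<in> borel_measurable m"
        using measurable_compose[OF id_meas \<psi>_meas[of "c z"]] by simp
      then show "(\<integral>\<^sup>+ \<alpha>. indicator {0..} z * \<psi> (c z) \<alpha> \<partial>m) = indicator {0..} z * (\<integral>\<^sup>+ y\<in>{0..}. min (G y) (c z) \<partial>lborel)"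
        by (simp add: nn_integral_cmult int_m)
    qed
    also have "\<dots> = vmu_fun \<nu> \<mu> f"
      unfolding LHS by (intro nn_integral_cong) (simp add: mult.commute)
    finally show ?thesis ..
  qed
qed

end
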